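(* Every $LS$-sequence of points $(\xi_{L,S}^n)_{n\in\mathbb{N}}$ does not have Poissonian pair correlations.
   Context: $\|x\|$ denotes the distance from $x$ to the nearest integer. A sequence $(x_n)_{n\in\mathbb{N}}$ in $[0,1)$ has Poissonian pair correlations if for every $s \geq 0$, $F_N(s) := \frac{1}{N}\#\{1 \leq l \neq m \leq N : \|x_l - x_m\| \leq s/N\} \to 2s$ as $N\to\infty$. $LS$-sequences: Let $L\in\mathbb{N}$, $S\in\mathbb{N}_0$ with $L+S\ge 2$, and let $\beta\in(0,1)$ be the solution of $L\beta+S\beta^2=1$. Let $\rho_{L,S}$ be the partition of $[0,1)$ into $L+S$ consecutive intervals, the first $L$ of length $\beta$ and the following $S$ of length $\beta^2$. For a partition $\pi$ of $[0,1)$, its $\rho$-refinement $\rho\pi$ is obtained by subdividing every interval of maximal length of $\pi$ positively homothetically to $\rho$. The $LS$-sequence of partitions is $(\rho_{L,S}^n\pi)_{n\in\mathbb{N}}$ with $\pi=\{[0,1)\}$; the partition $\rho_{L,S}^n\pi$ consists of $t_n$ intervals, of which $l_n$ have the maximal length $\beta^n$ (the rest have length $\beta^{n+1}$). The $LS$-sequence of points is defined as follows: $\Lambda^1_{L,S}$ is the list of the $t_1$ left endpoints of $\rho_{L,S}\pi$ ordered by magnitude. Given $\Lambda^n_{L,S}=\{\xi^1_{L,S},\ldots,\xi^{t_n}_{L,S}\}$ (ordered), the ordered list $\Lambda^{n+1}_{L,S}$ is $\xi^1,\ldots,\xi^{t_n}$, followed by $\psi^{n+1}_{1,0}(\xi^1),\ldots,\psi^{n+1}_{1,0}(\xi^{l_n}),\ldots,\psi^{n+1}_{L,0}(\xi^1),\ldots,\psi^{n+1}_{L,0}(\xi^{l_n})$,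 followed by $\psi^{n+1}_{L,1}(\xi^1),\ldots,\psi^{n+1}_{L,1}(\xi^{l_n}),\ldots,\psi^{n+1}_{L,S-1}(\xi^1),\ldots,\psi^{n+1}_{L,S-1}(\xi^{l_n})$, where $\psi^n_{i,j}(x)=x+i\beta^n+j\beta^{n+1}$. The $LS$-sequence of points $(\xi^n_{L,S})_{n\in\mathbb{N}}$ is the sequence whose first $t_n$ terms are $\Lambda^n_{L,S}$ for every $n$. (For $S=0$, $L=b$ one obtains the van der Corput sequence in base $b$.) *)

theory Defs
  imports Complex_Main
begin

definition dist_int :: "real \<Rightarrow> real" where
  "dist_int x = \<bar>x - of_int (round x)\<bar>"

definition pair_corr :: "(nat \<Rightarrow> real) \<Rightarrow> nat \<Rightarrow> real \<Rightarrow> real" where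
  "pair_corr x N s = (1 / real N) *
     real (card {(l, m). l \<in> {1..N} \<and> m \<in> {1..N} \<and> l \<noteq> m \<and>
                         dist_int (x l - x m) \<le> s / real N})"

definition poissonian_pc :: "(nat \<Rightarrow> real) \<Rightarrow> bool" where
  "poissonian_pc x \<longleftrightarrow> (\<forall>s::real. s \<ge> 0 \<longrightarrow> (\<lambda>N. pair_corr x N s) \<longlonglongrightarrow> 2 * s)"

definition LS_beta :: "nat \<Rightarrow> nat \<Rightarrow> real" where
  "LS_beta L S = (THE b. 0 < b \<and> b < 1 \<and> real L * b + real S * b ^ 2 = 1)"

text \<open>(t_n, l_n): number of intervals of the n-th partition and number of those of maximal length.\<close>
fun LS_tl :: "nat \<Rightarrow> nat \<Rightarrow> nat \<Rightarrow> nat \<times> nat" where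
  "LS_tl L S 0 = (1, 1)"
| "LS_tl L S (Suc n) = (let (t, l) = LS_tl L S n in (t + (L + S - 1) * l, L * l + (t - l)))"

definition LS_t :: "nat \<Rightarrow> nat \<Rightarrow> nat \<Rightarrow> nat" where
  "LS_t L S n = fst (LS_tl L S n)"

definition LS_l :: "nat \<Rightarrow> nat \<Rightarrow> nat \<Rightarrow> nat" where
  "LS_l L S n = snd (LS_tl L S n)"

text \<open>Offset of the k-th new left endpoint (k = 1..L+S-1) inside a maximal interval of
  the n-th partition: psi^{n+1}_{k,0} for k \<le> L, psi^{n+1}_{L,k-L} for k > L.\<close>
definition LS_offset :: "nat \<Rightarrow> nat \<Rightarrow> nat \<Rightarrow> nat \<Rightarrow> real" where
  "LS_offset L S n k =
     (let b = LS_beta L S in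
      if k \<le> L then real k * b ^ (n + 1)
      else real L * b ^ (n + 1) + real (k - L) * b ^ (n + 2))"

fun LS_Lambda :: "nat \<Rightarrow> nat \<Rightarrow> nat \<Rightarrow> real list" where
  "LS_Lambda L S 0 = [0]"
| "LS_Lambda L S (Suc n) =
     (let xs = LS_Lambda L S n in
      xs @ concat (map (\<lambda>k. map (\<lambda>x. x + LS_offset L S n k) (take (LS_l L S n) xs))
                       [1..<L + S]))"

text \<open>The LS-sequence of points, indexed from 1: the m-th point is the m-th entry of
  Lambda^m (which has t_m > m entries and is a prefix of all later Lambda^n).\<close>
definition LS_point :: "nat \<Rightarrow> nat \<Rightarrow> nat \<Rightarrow> real" where
  "LS_point L S m = LS_Lambda L S m ! (m - 1)"

end

theory Submission
  imports Defs
begin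


lemma beta_props:
  fixes L S :: nat
  assumes "L \<ge> 1" and "L + S \<ge> 2"
  shows "0 < LS_beta L S \<and> LS_beta L S < 1 \<and> real L * LS_beta L S + real S * LS_beta L S ^ 2 = 1"
proof -
  let ?f = "\<lambda>b::real. real L * b + real S * b ^ 2"
  have "\<exists>x. 0 \<le> x \<and> x \<le> 1 \<and> ?f x = 1"
  proof (rule IVT)
    show "?f 0 \<le> 1" by simp
    show "1 \<le> ?f 1" using assms by simp
    show "(0::real) \<le> 1" by simp
    show "\<forall>x. 0 \<le> x \<and> x \<le> 1 \<longrightarrow> isCont ?f x" by (auto intro!: continuous_intros)
  qed
  then obtain x where x: "0 \<le> x" "x \<le> 1" "?f x = 1" by blast
  have x0: "x \<noteq> 0" using x by auto
  have x1: "x \<noteq> 1"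
  proof
    assume "x = 1"
    then have "real (L + S) = 1" using x by simp
    then show False using assms by linarith
  qed
  have ex: "0 < x \<and> x < 1 \<and> ?f x = 1" using x x0 x1 by auto
  have uniq: "y = x" if "0 < y \<and> y < 1 \<and> ?f y = 1" for y
  proof (rule ccontr)
    assume "y \<noteq> x"
    then consider "y < x" | "x < y" by linarith
    then show False
    proof cases
      case 1
      have "real L * y < real L * x" using 1 assms by simp
      moreover have "real S * y^2 \<le> real S * x^2" using 1 that by (intro mult_left_mono power_mono) auto
      ultimately show False using that ex by linarith
    next
      case 2
      have "real L * x < real L * y" using 2 assms by simp
      moreover have "real S * x^2 \<le> real S * y^2" using 2 ex by (intro mult_left_mono power_mono) auto
      ultimately show False using that ex by linarith
    qed
  qed
  have "LS_beta L S = x" unfolding LS_beta_def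
    by (rule the_equality, rule ex, erule uniq)
  then show ?thesis using ex by simp
qed

lemma dist_int_ge:
  assumes "a \<le> \<bar>d\<bar>" "\<bar>d\<bar> \<le> 1 - a"
  shows "a \<le> dist_int d"
proof -
  define k where "k = round d"
  have "a \<le> \<bar>d - of_int k\<bar>"
  proof (cases "k = 0")
    case True then show ?thesis using assms by simp
  next
    case False
    then have "1 \<le> \<bar>real_of_int k\<bar>" by linarith
    then show ?thesis using assms by linarith
  qed
  then show ?thesis unfolding dist_int_def k_def .
qed

lemma Lambda_prefix: "\<exists>ys. LS_Lambda L S (m + d) = LS_Lambda L S m @ ys"
  by (induction d) (auto simp: Let_def)

lemma Lambda_nth_eq:
  assumes "i < length (LS_Lambda L S a)" "i < length (LS_Lambda L S b)"
  shows "LS_Lambda L S a ! i = LS_Lambda L S b ! i"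
proof (cases "a \<le> b")
  case True
  then obtain ys where "LS_Lambda L S b = LS_Lambda L S a @ ys"
    using Lambda_prefix[of L S a "b - a"] by auto
  then show ?thesis using assms by (simp add: nth_append)
next
  case False
  then obtain ys where "LS_Lambda L S a = LS_Lambda L S b @ ys"
    using Lambda_prefix[of L S b "a - b"] by auto
  then show ?thesis using assms by (simp add: nth_append)
qed



definition Rel :: "real \<times> real \<Rightarrow> real \<times> real \<Rightarrow> bool" where
  "Rel p q \<longleftrightarrow> fst p + snd p \<le> fst q \<or> fst q + snd q \<le> fst p"

definition child :: "nat \<Rightarrow> nat \<Rightarrow> nat \<Rightarrow> nat \<Rightarrow> real \<times> real \<Rightarrow> real \<times> real" where
  "child L S n k p = (fst p + LS_offset L S n k,
      if k < L then LS_beta L S ^ (n+1) else LS_beta L S ^ (n+2))"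

lemma Rel_sym: "Rel p q \<Longrightarrow> Rel q p" unfolding Rel_def by auto

lemma off_0: "LS_offset L S n 0 = 0" by (simp add: LS_offset_def Let_def)

lemma off_le:
  assumes "k < k'" "0 \<le> LS_beta L S"
  shows "LS_offset L S n k + (if k < L then LS_beta L S ^ (n+1) else LS_beta L S ^ (n+2))
         \<le> LS_offset L S n k'"
proof -
  define b where "b = LS_beta L S"
  have h: "0 \<le> b ^ (n+1)" "0 \<le> b ^ (n+2)" using assms by (auto simp: b_def)
  show ?thesis
  proof (cases "k' \<le> L")
    case True
    then have "real k + 1 \<le> real k'" using assms by simp
    then have "(real k + 1) * b^(n+1) \<le> real k' * b^(n+1)" using h by (intro mult_right_mono) auto
    then show ?thesis using True assms by (simp add: LS_offset_def Let_def b_def[symmetric] algebra_simps)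
  next
    case False
    then have kL: "L < k'" by simp
    have e: "real (k' - L) = real k' - real L" using kL by simp
    show ?thesis
    proof (cases "k < L")
      case True
      then have "real k + 1 \<le> real L" by simp
      then have "(real k + 1) * b^(n+1) \<le> real L * b^(n+1)" using h by (intro mult_right_mono) auto
      moreover have "0 \<le> (real k' - real L) * b^(n+2)" using h kL by simp
      ultimately show ?thesis using True kL by (simp add: LS_offset_def Let_def b_def[symmetric] algebra_simps e)
    next
      case False
      then have e2: "real (k - L) = real k - real L" by simp
      have "(real k - real L + 1) * b^(n+2) \<le> (real k' - real L) * b^(n+2)"
        using h assms by (intro mult_right_mono) auto
      moreover have "k \<le> L \<Longrightarrow> k = L" using False by simp
      ultimately show ?thesis using False kL
        by (auto simp add: LS_offset_def Let_def b_def[symmetric] algebra_simps e e2)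
    qed
  qed
qed

lemma off_nonneg:
  assumes "0 \<le> LS_beta L S"
  shows "0 \<le> LS_offset L S n k"
  using assms by (auto simp: LS_offset_def Let_def)

lemma off_top:
  assumes "L \<ge> 1" "L + S \<ge> 2" "k < L + S"
  shows "LS_offset L S n k + (if k < L then LS_beta L S ^ (n+1) else LS_beta L S ^ (n+2))
         \<le> LS_beta L S ^ n"
proof -
  define b where "b = LS_beta L S"
  have bp: "0 < b" "b < 1" "real L * b + real S * b^2 = 1" using beta_props[OF assms(1,2)] by (auto simp: b_def)
  have "LS_offset L S n k + (if k < L then b ^ (n+1) else b ^ (n+2)) \<le> LS_offset L S n (L+S)"
    using off_le[where k=k and k'="L+S" and L=L and S=S and n=n] assms(3) bp unfolding b_def by linarith
  also have "LS_offset L S n (L+S) = b^n * (real L * b + real S * b^2)"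
    unfolding LS_offset_def Let_def b_def[symmetric] by (cases "S = 0") (auto simp: algebra_simps power2_eq_square)
  also have "\<dots> = b^n" using bp by simp
  finally show ?thesis unfolding b_def .
qed



definition Inv :: "nat \<Rightarrow> nat \<Rightarrow> nat \<Rightarrow> (real \<times> real) list \<Rightarrow> (real \<times> real) list \<Rightarrow> bool" where
  "Inv L S n A B \<longleftrightarrow>
     (\<forall>p\<in>set A. snd p = LS_beta L S ^ n) \<and>
     (\<forall>p\<in>set B. snd p = LS_beta L S ^ (n+1)) \<and>
     (\<forall>p\<in>set (A @ B). 0 \<le> fst p \<and> fst p + snd p \<le> 1) \<and>
     sorted_wrt Rel (A @ B) \<and>
     LS_tl L S n = (length (A @ B), length A) \<and>
     map fst (A @ B) = LS_Lambda L S n \<and>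
     real (length A) * LS_beta L S ^ n + real (length B) * LS_beta L S ^ (n+1) = 1"

lemma Inv_0: "Inv L S 0 [(0,1)] []"
  unfolding Inv_def by (simp add: Rel_def)

lemma sorted_wrt_distinct:
  "sorted_wrt R xs \<Longrightarrow> (\<forall>x\<in>set xs. \<not> R x x) \<Longrightarrow> distinct xs"
  by (induction xs) auto

lemma distinct_sorted_ne: "distinct xs \<Longrightarrow> sorted_wrt (\<noteq>) xs"
  by (induction xs) auto

lemma sorted_wrt_pairwise:
  assumes "sorted_wrt R xs" "\<And>x y. R x y \<Longrightarrow> R y x" "x \<in> set xs" "y \<in> set xs" "x \<noteq> y"
  shows "R x y"
  using assms by (induction xs) auto

lemma distinct_blocks:
  "distinct ks \<Longrightarrow> distinct A \<Longrightarrow> distinct (concat (map (\<lambda>k. map (Pair k) A) ks))"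
  by (induction ks) (auto simp: distinct_map inj_on_def)

lemma contain:
  assumes L: "L \<ge> 1" "L + S \<ge> 2"
    and hA: "\<forall>p\<in>set A. snd p = LS_beta L S ^ n"
    and hB: "\<forall>p\<in>set B. snd p = LS_beta L S ^ (n+1)"
    and v: "(k = 0 \<and> p \<in> set (A @ B)) \<or> (p \<in> set A \<and> k < L + S)"
  shows "fst p \<le> fst (child L S n k p) \<and> fst (child L S n k p) + snd (child L S n k p) \<le> fst p + snd p"
proof -
  have bp: "0 < LS_beta L S" using beta_props[OF L] by simp
  have "p \<in> set A \<and> k < L + S \<or> (p \<in> set B \<and> k = 0)" using v L by auto
  then show ?thesis
  proof
    assume a: "p \<in> set A \<and> k < L + S"
    then show ?thesis using off_top[OF L, of k n] off_nonneg[of L S n k] bp hA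
      by (auto simp: child_def)
  next
    assume a: "p \<in> set B \<and> k = 0"
    then show ?thesis using hB L by (auto simp: child_def off_0)
  qed
qed

lemma child_rel:
  assumes L: "L \<ge> 1" "L + S \<ge> 2"
    and hA: "\<forall>p\<in>set A. snd p = LS_beta L S ^ n"
    and hB: "\<forall>p\<in>set B. snd p = LS_beta L S ^ (n+1)"
    and pw: "\<forall>p\<in>set (A@B). \<forall>q\<in>set (A@B). p \<noteq> q \<longrightarrow> Rel p q"
    and v: "(k = 0 \<and> p \<in> set (A @ B)) \<or> (p \<in> set A \<and> k < L + S)"
    and v': "(k' = 0 \<and> q \<in> set (A @ B)) \<or> (q \<in> set A \<and> k' < L + S)"
    and ne: "(k, p) \<noteq> (k', q)"
  shows "Rel (child L S n k p) (child L S n k' q)"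
proof (cases "p = q")
  case False
  then have "Rel p q" using pw v v' by auto
  then show ?thesis using contain[OF L hA hB v] contain[OF L hA hB v'] unfolding Rel_def by linarith
next
  case True
  then have kk: "k \<noteq> k'" using ne by auto
  have bp: "0 \<le> LS_beta L S" using beta_props[OF L] by simp
  have "k < L + S" "k' < L + S" using v v' L kk True by auto
  consider "k < k'" | "k' < k" using kk by linarith
  then show ?thesis
  proof cases
    case 1
    show ?thesis using off_le[OF 1 bp, of n] True unfolding Rel_def child_def by auto
  next
    case 2
    show ?thesis using off_le[OF 2 bp, of n] True unfolding Rel_def child_def by auto
  qed
qed



lemma Inv_step:
  assumes L: "L \<ge> 1" "L + S \<ge> 2" and I: "Inv L S n A B"
  shows "\<exists>A' B'. Inv L S (Suc n) A' B'"
proof -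
  define b where "b = LS_beta L S"
  have bp: "0 < b" "b < 1" "real L * b + real S * b^2 = 1" using beta_props[OF L] by (auto simp: b_def)
  note I' = I[unfolded Inv_def b_def[symmetric]]
  have hA: "\<forall>p\<in>set A. snd p = LS_beta L S ^ n" and hB: "\<forall>p\<in>set B. snd p = LS_beta L S ^ (n+1)"
    and bnd: "\<forall>p\<in>set (A @ B). 0 \<le> fst p \<and> fst p + snd p \<le> 1"
    and srt: "sorted_wrt Rel (A @ B)" and tl: "LS_tl L S n = (length (A @ B), length A)"
    and lam: "map fst (A @ B) = LS_Lambda L S n"
    and sm: "real (length A) * b ^ n + real (length B) * b ^ (n+1) = 1"
    using I' by (auto simp: b_def)
  let ?c = "child L S n"
  define A' where "A' = map (?c 0) (A @ B) @ concat (map (\<lambda>k. map (?c k) A) [1..<L])"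
  define B' where "B' = concat (map (\<lambda>k. map (?c k) A) [L..<L+S])"
  define T where "T = map (Pair 0) (A @ B) @ concat (map (\<lambda>k. map (Pair k) A) [1..<L+S])"
  have split: "[1..<L+S] = [1..<L] @ [L..<L+S]" using upt_add_eq_append[of 1 L S] L by simp
  have AB'T: "A' @ B' = map (\<lambda>(k,p). ?c k p) T"
    unfolding A'_def B'_def T_def split by (simp add: map_concat o_def)
  have validT: "(k = 0 \<and> p \<in> set (A @ B)) \<or> (p \<in> set A \<and> k < L + S)" if "(k, p) \<in> set T" for k p
    using that L unfolding T_def by auto
  have pw: "\<forall>p\<in>set (A@B). \<forall>q\<in>set (A@B). p \<noteq> q \<longrightarrow> Rel p q"
    using sorted_wrt_pairwise[OF srt] Rel_sym by blast
  have posA: "\<forall>x\<in>set (A@B). \<not> Rel x x"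
  proof
    fix x assume x: "x \<in> set (A@B)"
    have "0 < LS_beta L S" using bp by (simp add: b_def)
    then have "0 < snd x" using hA hB x by auto
    then show "\<not> Rel x x" unfolding Rel_def by simp
  qed
  have dAB: "distinct (A @ B)" by (rule sorted_wrt_distinct[OF srt posA])
  have dT: "distinct T" unfolding T_def
    using dAB distinct_blocks[of "[1..<L+S]" A] by (auto simp: distinct_map inj_on_def)
  have srt': "sorted_wrt Rel (A' @ B')"
    unfolding AB'T sorted_wrt_map
  proof (rule sorted_wrt_mono_rel[OF _ distinct_sorted_ne[OF dT]])
    fix x y assume xy: "x \<in> set T" "y \<in> set T" "x \<noteq> y"
    obtain k p where x: "x = (k, p)" by (cases x)
    obtain k' q where y: "y = (k', q)" by (cases y)
    show "Rel (case x of (k, p) \<Rightarrow> ?c k p) (case y of (k, p) \<Rightarrow> ?c k p)"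
      using child_rel[OF L hA hB pw validT validT] xy x y by auto
  qed
  have elems: "\<exists>k p. q = ?c k p \<and> ((k = 0 \<and> p \<in> set (A @ B)) \<or> (p \<in> set A \<and> k < L + S))"
    if "q \<in> set (A' @ B')" for q
  proof -
    from that obtain k p where kp: "(k,p) \<in> set T" "q = ?c k p" unfolding AB'T by auto
    show ?thesis using validT[OF kp(1)] kp(2) by blast
  qed
  have bnd': "\<forall>p\<in>set (A' @ B'). 0 \<le> fst p \<and> fst p + snd p \<le> 1"
  proof
    fix q assume "q \<in> set (A' @ B')"
    then obtain k p where q: "q = ?c k p" and v: "(k = 0 \<and> p \<in> set (A @ B)) \<or> (p \<in> set A \<and> k < L + S)"
      using elems by blast
    have "p \<in> set (A @ B)" using v by auto
    then have "0 \<le> fst p \<and> fst p + snd p \<le> 1" using bnd by blast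
    then show "0 \<le> fst q \<and> fst q + snd q \<le> 1" using contain[OF L hA hB v] unfolding q by linarith
  qed
  have hA': "\<forall>p\<in>set A'. snd p = LS_beta L S ^ Suc n"
    unfolding A'_def using L by (auto simp: child_def)
  have hB': "\<forall>p\<in>set B'. snd p = LS_beta L S ^ (Suc n + 1)"
    unfolding B'_def by (auto simp: child_def)
  have lenA': "length A' = length A + length B + (L - 1) * length A"
    unfolding A'_def by (simp add: length_concat o_def sum_list_triv)
  have lenB': "length B' = S * length A"
    unfolding B'_def by (simp add: length_concat o_def sum_list_triv)
  have tl': "LS_tl L S (Suc n) = (length (A' @ B'), length A')"
    using tl L by (cases L) (simp_all add: lenA' lenB' algebra_simps)
  have lsl: "LS_l L S n = length A" using tl by (simp add: LS_l_def)
  have lam': "map fst (A' @ B') = LS_Lambda L S (Suc n)"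
    using lam[symmetric] L unfolding A'_def B'_def
    by (simp add: Let_def lsl split split[simplified] map_concat o_def child_def take_map off_0)
  have lenA2: "length A' = length B + L * length A" using L by (cases L) (simp_all add: lenA')
  have "real (length A') * b ^ Suc n + real (length B') * b ^ (Suc n + 1)
        = real (length B) * b ^ (n+1) + real (length A) * b ^ n * (real L * b + real S * b^2)"
    by (simp add: lenA2 lenB' algebra_simps power2_eq_square)
  also have "\<dots> = 1" using sm bp by simp
  finally have sm': "real (length A') * b ^ Suc n + real (length B') * b ^ (Suc n + 1) = 1" .
  show ?thesis
    apply (rule exI[of _ A'], rule exI[of _ B'])
    unfolding Inv_def using hA' hB' bnd' srt' tl' lam' sm' by (simp add: b_def)
qed



lemma Inv_ex: "L \<ge> 1 \<Longrightarrow> L + S \<ge> 2 \<Longrightarrow> \<exists>A B. Inv L S n A B"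
proof (induction n)
  case 0 then show ?case using Inv_0 by blast
next
  case (Suc n) then show ?case using Inv_step by blast
qed

lemma tl_growth:
  assumes "L \<ge> 1" "L + S \<ge> 2"
  shows "1 \<le> snd (LS_tl L S n) \<and> snd (LS_tl L S n) \<le> fst (LS_tl L S n) \<and> n + 1 \<le> fst (LS_tl L S n)"
proof (induction n)
  case 0 then show ?case by simp
next
  case (Suc n)
  obtain t l where tl: "LS_tl L S n = (t, l)" by (cases "LS_tl L S n")
  have h: "1 \<le> l" "l \<le> t" "n + 1 \<le> t" using Suc tl by auto
  have a: "l \<le> L * l" using assms by simp
  have b: "1 * l \<le> (L + S - 1) * l" using assms by (intro mult_le_mono1) simp
  have c: "(L - 1) * l \<le> (L + S - 1) * l" by (intro mult_le_mono1) simp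
  have d: "(L - 1) * l = L * l - l" by (simp add: diff_mult_distrib)
  have e: "LS_tl L S (Suc n) = (t + (L + S - 1) * l, L * l + (t - l))" using tl by simp
  show ?case unfolding e prod.sel using a b c d h by arith
qed

lemma t_Suc_gt: "L \<ge> 1 \<Longrightarrow> L + S \<ge> 2 \<Longrightarrow> LS_t L S n < LS_t L S (Suc n)"
proof -
  assume L: "L \<ge> 1" "L + S \<ge> 2"
  obtain t l where tl: "LS_tl L S n = (t, l)" by (cases "LS_tl L S n")
  have "1 \<le> l" using tl_growth[OF L, of n] tl by simp
  moreover have "1 \<le> L + S - 1" using L by simp
  ultimately have "1 \<le> (L + S - 1) * l" by (metis mult_le_mono nat_mult_1)
  then show ?thesis using tl L by (simp add: LS_t_def)
qed

lemma main_level: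
  assumes L: "L \<ge> 1" "L + S \<ge> 2"
  shows "real (LS_t L S n) * LS_beta L S ^ n \<ge> 1 \<and> length (LS_Lambda L S n) = LS_t L S n \<and>
    (\<forall>i j. i < LS_t L S n \<longrightarrow> j < LS_t L S n \<longrightarrow> i \<noteq> j \<longrightarrow>
       LS_beta L S ^ (n+1) \<le> dist_int (LS_Lambda L S n ! i - LS_Lambda L S n ! j))"
proof -
  define b where "b = LS_beta L S"
  have bp: "0 < b" "b < 1" using beta_props[OF L] by (auto simp: b_def)
  obtain A B where I: "Inv L S n A B" using Inv_ex[OF L] by blast
  have hA: "\<forall>p\<in>set A. snd p = b ^ n" and hB: "\<forall>p\<in>set B. snd p = b ^ (n+1)"
    and bnd: "\<forall>p\<in>set (A @ B). 0 \<le> fst p \<and> fst p + snd p \<le> 1"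
    and srt: "sorted_wrt Rel (A @ B)" and tl: "LS_tl L S n = (length (A @ B), length A)"
    and lam: "map fst (A @ B) = LS_Lambda L S n"
    and sm: "real (length A) * b ^ n + real (length B) * b ^ (n+1) = 1"
    using I unfolding Inv_def b_def by auto
  have tdef: "LS_t L S n = length (A @ B)" using tl by (simp add: LS_t_def)
  have len: "length (LS_Lambda L S n) = LS_t L S n" using lam tdef by (metis length_map)
  have "b ^ (n+1) \<le> b ^ n" using bp by (simp add: power_decreasing)
  then have "real (length B) * b ^ (n+1) \<le> real (length B) * b ^ n" by (simp add: mult_left_mono)
  then have t1: "real (LS_t L S n) * b ^ n \<ge> 1" using sm by (simp add: tdef algebra_simps)
  have snd_ge: "b ^ (n+1) \<le> snd p" if "p \<in> set (A @ B)" for p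
    using that hA hB \<open>b ^ (n+1) \<le> b ^ n\<close> by auto
  have gap: "b ^ (n+1) \<le> dist_int (LS_Lambda L S n ! i - LS_Lambda L S n ! j)"
    if ij: "i < LS_t L S n" "j < LS_t L S n" "i \<noteq> j" for i j
  proof -
    let ?J = "A @ B"
    have R: "Rel (?J ! i) (?J ! j)"
    proof (cases "i < j")
      case True then show ?thesis using sorted_wrt_nth_less[OF srt True] ij tdef by simp
    next
      case False then have "j < i" using ij by simp
      then show ?thesis using sorted_wrt_nth_less[OF srt, of j i] ij tdef Rel_sym by simp
    qed
    have pi: "?J ! i \<in> set ?J" by (rule nth_mem) (use ij tdef in simp)
    have pj: "?J ! j \<in> set ?J" by (rule nth_mem) (use ij tdef in simp)
    have e: "LS_Lambda L S n ! i = fst (?J ! i)" "LS_Lambda L S n ! j = fst (?J ! j)"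
      using ij tdef by (simp_all add: lam[symmetric] del: map_append)
    have bi: "0 \<le> fst (?J ! i)" "fst (?J ! i) + snd (?J ! i) \<le> 1" using bnd pi by auto
    have bj: "0 \<le> fst (?J ! j)" "fst (?J ! j) + snd (?J ! j) \<le> 1" using bnd pj by auto
    have si: "b ^ (n+1) \<le> snd (?J ! i)" using snd_ge pi by blast
    have sj: "b ^ (n+1) \<le> snd (?J ! j)" using snd_ge pj by blast
    have bpos: "0 < b ^ (n+1)" using bp by simp
    define u where "u = fst (?J ! i)"
    define v where "v = fst (?J ! j)"
    have "b ^ (n+1) \<le> \<bar>u - v\<bar> \<and> \<bar>u - v\<bar> \<le> 1 - b ^ (n+1)"
    proof (cases "fst (?J ! i) + snd (?J ! i) \<le> fst (?J ! j)")
      case True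
      then have "b ^ (n+1) \<le> v - u" "v - u \<le> 1 - b ^ (n+1)" using bi bj si sj unfolding u_def v_def by linarith+
      then show ?thesis using bpos by (auto simp: abs_if)
    next
      case False
      then have "fst (?J ! j) + snd (?J ! j) \<le> fst (?J ! i)" using R unfolding Rel_def by blast
      then have "b ^ (n+1) \<le> u - v" "u - v \<le> 1 - b ^ (n+1)" using bi bj si sj unfolding u_def v_def by linarith+
      then show ?thesis using bpos by (auto simp: abs_if)
    qed
    then have "b ^ (n+1) \<le> dist_int (u - v)" using dist_int_ge by blast
    then show ?thesis unfolding e u_def v_def .
  qed
  show ?thesis using t1 len gap unfolding b_def by blast
qed



lemma point_eq:
  assumes L: "L \<ge> 1" "L + S \<ge> 2" and m: "1 \<le> m" "m \<le> LS_t L S n"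
  shows "LS_point L S m = LS_Lambda L S n ! (m - 1)"
proof -
  have "m + 1 \<le> LS_t L S m" using tl_growth[OF L, of m] by (simp add: LS_t_def)
  then have "m - 1 < length (LS_Lambda L S m)" using main_level[OF L, of m] by simp
  moreover have "m - 1 < length (LS_Lambda L S n)" using main_level[OF L, of n] m by simp
  ultimately show ?thesis unfolding LS_point_def by (rule Lambda_nth_eq)
qed

lemma pc_zero:
  assumes L: "L \<ge> 1" "L + S \<ge> 2"
  shows "pair_corr (LS_point L S) (LS_t L S n) (LS_beta L S / 2) = 0"
proof -
  define b where "b = LS_beta L S"
  define N where "N = LS_t L S n"
  have bp: "0 < b" "b < 1" using beta_props[OF L] by (auto simp: b_def)
  have hML: "real N * b ^ n \<ge> 1"
    and gap: "\<And>i j. i < N \<Longrightarrow> j < N \<Longrightarrow> i \<noteq> j \<Longrightarrow>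
       b ^ (n+1) \<le> dist_int (LS_Lambda L S n ! i - LS_Lambda L S n ! j)"
    using main_level[OF L, of n] unfolding b_def N_def by auto
  have Npos: "0 < real N" using hML bp by (metis mult_eq_0_iff not_le not_one_le_zero of_nat_0_eq_iff of_nat_0_less_iff gr0I)
  have "b / 2 < b * (real N * b ^ n)" using hML bp by (simp add: mult_le_cancel_left1 less_le_trans[of _ b])
  then have "b / 2 < b ^ (n+1) * real N" by (simp add: algebra_simps)
  then have key: "b / 2 / real N < b ^ (n+1)" using Npos by (simp add: divide_less_eq)
  have E: "{(l, m). l \<in> {1..N} \<and> m \<in> {1..N} \<and> l \<noteq> m \<and>
           dist_int (LS_point L S l - LS_point L S m) \<le> b / 2 / real N} = {}"
  proof (rule equals0I)
    fix x assume "x \<in> {(l, m). l \<in> {1..N} \<and> m \<in> {1..N} \<and> l \<noteq> m \<and>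
           dist_int (LS_point L S l - LS_point L S m) \<le> b / 2 / real N}"
    then obtain l m where x: "l \<in> {1..N}" "m \<in> {1..N}" "l \<noteq> m"
      "dist_int (LS_point L S l - LS_point L S m) \<le> b / 2 / real N" by auto
    have "LS_point L S l = LS_Lambda L S n ! (l - 1)" "LS_point L S m = LS_Lambda L S n ! (m - 1)"
      using point_eq[OF L] x unfolding N_def by auto
    moreover have "b ^ (n+1) \<le> dist_int (LS_Lambda L S n ! (l - 1) - LS_Lambda L S n ! (m - 1))"
      using x by (intro gap) auto
    ultimately show False using x(4) key by simp
  qed
  show ?thesis unfolding pair_corr_def b_def[symmetric] N_def[symmetric] E by simp
qed

theorem corollary1:
  fixes L S :: nat
  assumes "L \<ge> 1" and "L + S \<ge> 2"
  shows "\<not> poissonian_pc (LS_point L S)"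
proof
  assume P: "poissonian_pc (LS_point L S)"
  define b where "b = LS_beta L S"
  have bp: "0 < b" "b < 1" using beta_props[OF assms] by (auto simp: b_def)
  have lim: "(\<lambda>N. pair_corr (LS_point L S) N (b / 2)) \<longlonglongrightarrow> 2 * (b / 2)"
  proof -
    have "b / 2 \<ge> 0" using bp by simp
    then show ?thesis using P unfolding poissonian_pc_def by blast
  qed
  have sm: "strict_mono (LS_t L S)" using t_Suc_gt[OF assms] by (simp add: strict_mono_Suc_iff)
  have "((\<lambda>N. pair_corr (LS_point L S) N (b / 2)) \<circ> LS_t L S) \<longlonglongrightarrow> 2 * (b / 2)"
    by (rule LIMSEQ_subseq_LIMSEQ[OF lim sm])
  moreover have "((\<lambda>N. pair_corr (LS_point L S) N (b / 2)) \<circ> LS_t L S) = (\<lambda>n. 0)"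
    using pc_zero[OF assms] by (auto simp: b_def)
  ultimately have "(\<lambda>n. 0::real) \<longlonglongrightarrow> b" by simp
  then have "b = 0" using LIMSEQ_unique tendsto_const by metis
  then show False using bp by simp
qed


end
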